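(* Let $q$ be a complex number with $|q|<1$. Then \[ \sum_{n\geq 0} q^{2n} (q^{4n+4};q^4)_\infty (q;q)_{2n} = \frac{2(q^4;q^4)_\infty}{1+q}- \frac{(q;q)_\infty}{1+q}, \] and \[ (1+q) \sum_{n\geq 0} \frac{(-q^2;q^2)_n\, q^{2n+1}}{(q;q^2)_{n+1}} = \frac{(q^4;q^4)_\infty}{(q;q)_\infty}-1 . \]
   Context: For a complex number $a$ and $|q|<1$: $(a;q)_0=1$, $(a;q)_n=\prod_{j=0}^{n-1}(1-aq^j)$ for integers $n\ge 1$, and $(a;q)_\infty=\prod_{j=0}^{\infty}(1-aq^j)$. *)

theory Defs
  imports "HOL-Analysis.Analysis"
begin

definition qpoch :: "complex \<Rightarrow> complex \<Rightarrow> nat \<Rightarrow> complex" where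
  "qpoch a q n = (\<Prod>j<n. 1 - a * q ^ j)"

definition qpoch_inf :: "complex \<Rightarrow> complex \<Rightarrow> complex" where
  "qpoch_inf a q = (\<Prod>j. 1 - a * q ^ j)"

end

theory Submission
  imports Defs
begin

lemma qpoch_conv:
  fixes a r :: complex
  assumes "norm r < 1"
  shows "convergent_prod (\<lambda>j. 1 - a * r ^ j)"
proof -
  have "summable (\<lambda>j. norm a * norm r ^ j)"
    using assms by (intro summable_mult summable_geometric) auto
  hence "summable (\<lambda>j. norm ((1 - a * r ^ j) - 1))"
    by (simp add: norm_mult norm_power)
  thus ?thesis
    by (intro abs_convergent_prod_imp_convergent_prod summable_imp_abs_convergent_prod)
qed

lemma qpoch_lim:
  fixes a r :: complex
  assumes "norm r < 1"
  shows "(\<lambda>N. qpoch a r N) \<longlonglongrightarrow> qpoch_inf a r"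
proof -
  have "(\<lambda>n. \<Prod>i\<le>n. 1 - a * r ^ i) \<longlonglongrightarrow> qpoch_inf a r"
    unfolding qpoch_inf_def by (rule convergent_prod_LIMSEQ[OF qpoch_conv[OF assms]])
  hence "(\<lambda>n. qpoch a r (Suc n)) \<longlonglongrightarrow> qpoch_inf a r"
    by (simp add: qpoch_def lessThan_Suc_atMost)
  thus ?thesis by (rule LIMSEQ_imp_Suc)
qed

lemma factor_nz:
  fixes a r :: complex
  assumes "norm r < 1" "norm a < 1"
  shows "1 - a * r ^ j \<noteq> 0"
proof
  assume "1 - a * r ^ j = 0"
  hence "a * r ^ j = 1" by simp
  hence "norm a * norm r ^ j = 1" by (metis norm_mult norm_one norm_power)
  moreover have "norm r ^ j \<le> 1" using assms by (simp add: power_le_one)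
  ultimately show False using assms
    by (smt (verit) mult_left_le norm_ge_zero)
qed

lemma qpoch_nz:
  fixes a r :: complex
  assumes "norm r < 1" "norm a < 1"
  shows "qpoch a r n \<noteq> 0"
  unfolding qpoch_def using factor_nz[OF assms] by simp

lemma qpoch_inf_nz:
  fixes a r :: complex
  assumes "norm r < 1" "norm a < 1"
  shows "qpoch_inf a r \<noteq> 0"
  unfolding qpoch_inf_def using factor_nz[OF assms]
  by (intro prodinf_nonzero qpoch_conv assms)

lemma qpoch_shift:
  fixes r :: complex
  assumes "norm r < 1"
  shows "qpoch_inf r r = qpoch r r n * qpoch_inf (r ^ (n+1)) r"
proof -
  have eq: "qpoch r r (N + n) = qpoch r r n * qpoch (r ^ (n+1)) r N" for N
    unfolding qpoch_def
    by (induction N) (simp_all add: power_add mult_ac)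
  have "(\<lambda>N. qpoch r r (N + n)) \<longlonglongrightarrow> qpoch_inf r r"
    using LIMSEQ_ignore_initial_segment[OF qpoch_lim[OF assms]] .
  moreover have "(\<lambda>N. qpoch r r (N + n)) \<longlonglongrightarrow> qpoch r r n * qpoch_inf (r ^ (n+1)) r"
    unfolding eq by (intro tendsto_mult tendsto_const qpoch_lim assms)
  ultimately show ?thesis using LIMSEQ_unique by blast
qed


lemma I1:
  fixes q :: complex
  shows "qpoch (- (q^2)) (q^2) n * qpoch (q^2) (q^2) n = qpoch (q^4) (q^4) n"
proof (induction n)
  case 0 then show ?case by (simp add: qpoch_def)
next
  case (Suc n)
  have f: "(1 - (- (q^2)) * (q^2)^n) * (1 - q^2 * (q^2)^n) = 1 - q^4 * (q^4)^n"
    by (simp add: power_mult[symmetric] algebra_simps power_add[symmetric] mult_2_right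
         flip: power_add) (simp add: power_mult_distrib power_add algebra_simps numeral_eq_Suc)
  have "qpoch (- (q^2)) (q^2) (Suc n) * qpoch (q^2) (q^2) (Suc n)
      = (qpoch (- (q^2)) (q^2) n * qpoch (q^2) (q^2) n) *
        ((1 - (- (q^2)) * (q^2)^n) * (1 - q^2 * (q^2)^n))"
    by (simp add: qpoch_def mult_ac)
  also have "\<dots> = qpoch (q^4) (q^4) (Suc n)" using Suc f by (simp add: qpoch_def)
  finally show ?case .
qed

lemma I2:
  fixes q :: complex
  shows "qpoch q (q^2) n * qpoch (q^2) (q^2) n = qpoch q q (2*n)"
proof (induction n)
  case 0 then show ?case by (simp add: qpoch_def)
next
  case (Suc n)
  have e: "qpoch q q (2 * Suc n) = qpoch q q (2*n) * (1 - q * q^(2*n)) * (1 - q * q^(Suc (2*n)))"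
    by (simp add: qpoch_def)
  have "qpoch q (q^2) (Suc n) * qpoch (q^2) (q^2) (Suc n)
      = (qpoch q (q^2) n * qpoch (q^2) (q^2) n) * ((1 - q * (q^2)^n) * (1 - q^2 * (q^2)^n))"
    by (simp add: qpoch_def mult_ac)
  also have "\<dots> = qpoch q q (2 * Suc n)"
  proof -
    have p: "(q^2)^n = q^(2*n)" "q^(Suc (2*n)) = q * q^(2*n)" by (simp_all add: power_mult)
    show ?thesis unfolding e p Suc[symmetric] by (simp add: algebra_simps power2_eq_square)
  qed
  finally show ?case .
qed


lemma E2_lim:
  fixes q :: complex
  assumes "norm q < 1"
  shows "(\<lambda>N. qpoch q q (2*N)) \<longlonglongrightarrow> qpoch_inf q q"
proof -
  have "strict_mono (\<lambda>N::nat. 2*N)" by (auto simp: strict_mono_def)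
  from LIMSEQ_subseq_LIMSEQ[OF qpoch_lim[OF assms] this] show ?thesis by (simp add: o_def)
qed

lemma nq2: "norm (q::complex) < 1 \<Longrightarrow> norm (q^k) < 1 \<or> k = 0"
proof (cases k)
  case (Suc m)
  assume q: "norm q < 1"
  have "norm q ^ m \<le> 1" using q by (simp add: power_le_one)
  hence "norm q * norm q ^ m \<le> norm q" by (simp add: mult_left_le)
  thus ?thesis using Suc q by (simp add: norm_mult norm_power)
qed simp

lemma nq2': "norm (q::complex) < 1 \<Longrightarrow> k > 0 \<Longrightarrow> norm (q^k) < 1"
  using nq2 by blast

lemma alg2:
  fixes q x A P :: complex
  assumes "A \<noteq> 0" "1 - q*x \<noteq> 0"
  shows "(1+q) * (P * (q*x) / (A*(1-q*x))) = P*(1+q^2*x)/(A*(1-q*x)) - P/A"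
  using assms by (simp add: field_simps power2_eq_square)

lemma part2:
  fixes q :: complex
  assumes q: "norm q < 1"
  shows "(1 + q) * (\<Sum>n. qpoch (- (q ^ 2)) (q ^ 2) n * q ^ (2*n+1) / qpoch q (q ^ 2) (n+1))
           = qpoch_inf (q ^ 4) (q ^ 4) / qpoch_inf q q - 1"
proof -
  define T where "T n = qpoch (- (q ^ 2)) (q ^ 2) n * q ^ (2*n+1) / qpoch q (q ^ 2) (n+1)" for n
  define a where "a N = qpoch (- (q ^ 2)) (q ^ 2) N / qpoch q (q ^ 2) N" for N
  have n2: "norm (q^2) < 1" and n4: "norm (q^4) < 1" using nq2'[OF q] by auto
  have nzA: "qpoch q (q^2) n \<noteq> 0" for n using qpoch_nz[OF n2 q] .
  have nzB: "qpoch (q^2) (q^2) n \<noteq> 0" for n using qpoch_nz[OF n2 n2] .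
  have nzE: "qpoch q q n \<noteq> 0" for n using qpoch_nz[OF q q] .
  have nzC: "qpoch_inf q q \<noteq> 0" using qpoch_inf_nz[OF q q] .
  have q1: "1 + q \<noteq> 0"
  proof
    assume "1 + q = 0" hence "q = -1" by (simp add: add_eq_0_iff)
    with q show False by simp
  qed
  have step: "(1 + q) * T N = a (Suc N) - a N" for N
  proof -
    define x where "x = (q^2)^N"
    have nz1: "1 - q * x \<noteq> 0" unfolding x_def using factor_nz[OF n2 q] .
    have e1: "qpoch q (q ^ 2) (Suc N) = qpoch q (q^2) N * (1 - q * x)"
      by (simp add: qpoch_def x_def)
    have e2: "qpoch (- (q ^ 2)) (q ^ 2) (Suc N) = qpoch (- (q ^ 2)) (q ^ 2) N * (1 + q^2 * x)"
      by (simp add: qpoch_def x_def)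
    have e3: "q ^ Suc (2*N) = q * x" by (simp add: x_def power_mult)
    show ?thesis unfolding T_def a_def Suc_eq_plus1[symmetric] e1 e2 e3
      using nzA[of N] nz1 by (rule alg2)
  qed
  have tele: "(1 + q) * (\<Sum>n<N. T n) = a N - 1" for N
  proof (induction N)
    case 0 show ?case by (simp add: a_def qpoch_def)
  next
    case (Suc N) then show ?case using step[of N] by (simp add: distrib_left)
  qed
  have aeq: "a N = qpoch (q^4) (q^4) N / qpoch q q (2*N)" for N
    unfolding a_def I1[of q N, symmetric] I2[of q N, symmetric] using nzB[of N] nzA[of N]
    by (simp add: field_simps)
  have alim: "a \<longlonglongrightarrow> qpoch_inf (q ^ 4) (q ^ 4) / qpoch_inf q q"
    unfolding aeq by (intro tendsto_divide qpoch_lim n4 E2_lim q nzC)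
  have "(\<lambda>N. \<Sum>n<N. T n) = (\<lambda>N. (a N - 1) / (1 + q))"
    using tele q1 by (auto simp: field_simps)
  moreover have "(\<lambda>N. (a N - 1) / (1 + q)) \<longlonglongrightarrow> (qpoch_inf (q ^ 4) (q ^ 4) / qpoch_inf q q - 1) / (1 + q)"
    by (intro tendsto_divide tendsto_diff alim tendsto_const q1)
  ultimately have "T sums ((qpoch_inf (q ^ 4) (q ^ 4) / qpoch_inf q q - 1) / (1 + q))"
    by (simp add: sums_def)
  hence "(\<Sum>n. T n) = (qpoch_inf (q ^ 4) (q ^ 4) / qpoch_inf q q - 1) / (1 + q)"
    by (rule sums_unique[symmetric])
  thus ?thesis unfolding T_def using q1 by simp
qed


lemma alg1:
  fixes q x D E :: complex
  assumes "D \<noteq> 0" "1 - q^4*x^2 \<noteq> 0"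
  shows "E*(1-q*x)*(1-q*(q*x))/(D*(1-q^4*x^2)) * (1+q^2*x) = E/D*(1-q*x)"
proof -
  have f: "1 - q^4*x^2 = (1-q*(q*x))*(1+q^2*x)" by (simp add: algebra_simps power2_eq_square power4_eq_xxxx)
  have g: "E*a*c/(D*(c*d)) * d = E/D*a" if "c*d \<noteq> 0" for a c d :: complex
    using that assms(1) by (simp add: field_simps)
  show ?thesis using g[of "1-q*(q*x)" "1+q^2*x" "1-q*x"] assms(2) unfolding f by simp
qed

lemma part1:
  fixes q :: complex
  assumes q: "norm q < 1"
  shows "(\<Sum>n. q ^ (2*n) * qpoch_inf (q ^ (4*n+4)) (q ^ 4) * qpoch q q (2*n))
           = 2 * qpoch_inf (q ^ 4) (q ^ 4) / (1 + q) - qpoch_inf q q / (1 + q)"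
proof -
  define T where "T n = q ^ (2*n) * qpoch_inf (q ^ (4*n+4)) (q ^ 4) * qpoch q q (2*n)" for n
  define P4 where "P4 = qpoch_inf (q ^ 4) (q ^ 4)"
  define C where "C = qpoch_inf q q"
  define b where "b N = qpoch q q (2*N) / qpoch (q^4) (q^4) N" for N
  have n2: "norm (q^2) < 1" and n4: "norm (q^4) < 1" using nq2'[OF q] by auto
  have nzD: "qpoch (q^4) (q^4) n \<noteq> 0" for n using qpoch_nz[OF n4 n4] .
  have nzP: "P4 \<noteq> 0" unfolding P4_def using qpoch_inf_nz[OF n4 n4] .
  have q1: "1 + q \<noteq> 0"
  proof
    assume "1 + q = 0" hence "q = -1" by (simp add: add_eq_0_iff)
    with q show False by simp
  qed
  have Teq: "T n = P4 * (q^(2*n) * b n)" for n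
  proof -
    have "P4 = qpoch (q^4) (q^4) n * qpoch_inf ((q^4) ^ (n+1)) (q^4)"
      unfolding P4_def by (rule qpoch_shift[OF n4])
    moreover have "(q^4) ^ (n+1) = q ^ (4*n+4)"
    proof -
      have "4*n+4 = 4*(n+1)" by simp
      thus ?thesis by (simp only: power_mult)
    qed
    ultimately have "qpoch_inf (q ^ (4*n+4)) (q ^ 4) = P4 / qpoch (q^4) (q^4) n"
      using nzD[of n] by (simp add: field_simps)
    thus ?thesis unfolding T_def b_def by simp
  qed
  have step: "b (Suc N) * (1 + q^(2 * Suc N)) = b N * (1 - q * q^(2*N))" for N
  proof -
    define x where "x = q^(2*N)"
    have e1: "qpoch q q (2 * Suc N) = qpoch q q (2*N) * (1 - q*x) * (1 - q*(q*x))"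
      by (simp add: qpoch_def x_def)
    have e2: "qpoch (q^4) (q^4) (Suc N) = qpoch (q^4) (q^4) N * (1 - q^4 * x^2)"
    proof -
      have "(q^4)^N = x^2" by (simp add: x_def power_mult[symmetric] mult_ac)
      thus ?thesis by (simp add: qpoch_def)
    qed
    have e3: "q^(2 * Suc N) = q^2 * x" by (simp add: x_def power_add power2_eq_square)
    have nz: "1 - q^4 * x^2 \<noteq> 0"
    proof -
      have "x^2 = (q^4)^N" by (simp add: x_def power_mult[symmetric] mult_ac)
      thus ?thesis using factor_nz[OF n4 n4, of N] by simp
    qed
    show ?thesis unfolding b_def e1 e2 e3 x_def[symmetric]
      by (rule alg1[OF nzD nz])
  qed
  have tele: "(1 + q) * (\<Sum>n<N. q^(2*n) * b n) = 2 - b N * (1 + q^(2*N))" for N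
  proof (induction N)
    case 0 show ?case by (simp add: b_def qpoch_def)
  next
    case (Suc N)
    have "(1 + q) * (\<Sum>n<Suc N. q^(2*n) * b n) = 2 - b N * (1 + q^(2*N)) + (1+q) * (q^(2*N) * b N)"
      using Suc by (simp add: distrib_left)
    also have "\<dots> = 2 - b N * (1 - q * q^(2*N))" by (simp add: algebra_simps)
    also have "\<dots> = 2 - b (Suc N) * (1 + q^(2 * Suc N))" using step[of N] by simp
    finally show ?case .
  qed
  have blim: "b \<longlonglongrightarrow> C / P4"
    unfolding b_def C_def P4_def using nzP unfolding P4_def
    by (intro tendsto_divide qpoch_lim n4 E2_lim q)
  have plim: "(\<lambda>N. q^(2*N)) \<longlonglongrightarrow> 0"
    using LIMSEQ_power_zero[OF n2] by (simp add: power_mult)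
  have "(\<lambda>N. \<Sum>n<N. T n) = (\<lambda>N. P4 * ((2 - b N * (1 + q^(2*N))) / (1 + q)))"
  proof
    fix N
    have "(\<Sum>n<N. T n) = P4 * (\<Sum>n<N. q^(2*n) * b n)" unfolding Teq by (simp add: sum_distrib_left)
    also have "(\<Sum>n<N. q^(2*n) * b n) = (2 - b N * (1 + q^(2*N))) / (1 + q)"
      using tele[of N] q1 by (simp add: field_simps)
    finally show "(\<Sum>n<N. T n) = P4 * ((2 - b N * (1 + q^(2*N))) / (1 + q))" .
  qed
  moreover have "(\<lambda>N. P4 * ((2 - b N * (1 + q^(2*N))) / (1 + q))) \<longlonglongrightarrow> P4 * ((2 - C / P4 * (1 + 0)) / (1 + q))"
    by (intro tendsto_intros blim plim q1)
  ultimately have "T sums (P4 * ((2 - C / P4 * (1 + 0)) / (1 + q)))" by (simp add: sums_def)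
  hence "(\<Sum>n. T n) = P4 * ((2 - C / P4 * (1 + 0)) / (1 + q))" by (rule sums_unique[symmetric])
  also have "\<dots> = (P4 * (2 - C / P4)) / (1 + q)" by simp
  also have "(P4 * (2 - C / P4)) / (1 + q) = (2 * P4 - C) / (1 + q)" using nzP by (simp add: right_diff_distrib)
  also have "\<dots> = 2 * P4 / (1 + q) - C / (1 + q)" by (simp add: diff_divide_distrib)
  finally show ?thesis unfolding T_def P4_def C_def .
qed

theorem theorem1:
  fixes q :: complex
  assumes "norm q < 1"
  shows "(\<Sum>n. q ^ (2*n) * qpoch_inf (q ^ (4*n+4)) (q ^ 4) * qpoch q q (2*n))
           = 2 * qpoch_inf (q ^ 4) (q ^ 4) / (1 + q) - qpoch_inf q q / (1 + q)
       \<and> (1 + q) * (\<Sum>n. qpoch (- (q ^ 2)) (q ^ 2) n * q ^ (2*n+1) / qpoch q (q ^ 2) (n+1))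
           = qpoch_inf (q ^ 4) (q ^ 4) / qpoch_inf q q - 1"
  using part1[OF assms] part2[OF assms] by blast

end
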